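(* Let $N_r,N_t$ be positive integers and let $\mathbf{H}$ be a random $N_r\times N_t$ complex matrix. For every $\mathrm{snr}>0$, $$I^{\rm mmse}(\mathrm{snr},N_r,N_t)=N_t\,E_{\mathbf H}\big[I^{\rm opt}(\mathrm{snr},N_r,N_t,\mathbf H)\big]-\sum_{i=1}^{N_t}E_{\mathbf H_i}\Big[I^{\rm opt}\Big(\tfrac{N_t-1}{N_t}\mathrm{snr},N_r,N_t-1,\mathbf H_i\Big)\Big],$$ where $\mathbf H_i$ is $\mathbf H$ with its $i$th column removed.
   Context: The channel $\mathbf H$ is normalized so that $E[\mathrm{tr}(\mathbf H\mathbf H^\dagger)]=N_rN_t$. For a deterministic complex matrix $\mathbf G$ with $N_r$ rows and $N$ columns and $\mathrm{snr}>0$, $I^{\rm opt}(\mathrm{snr},N_r,N,\mathbf G)=\log_2\det\big(\mathbf I_{N_r}+\frac{\mathrm{snr}}{N}\mathbf G\mathbf G^\dagger\big)$. The MMSE output SINR of stream $i$ is $\gamma_i=1/\big[(\mathbf I_{N_t}+\frac{\mathrm{snr}}{N_t}\mathbf H^\dagger\mathbf H)^{-1}\big]_{i,i}-1$, where $[\cdot]_{i,i}$ is the $i$th diagonal entry, and the MMSE achievable sum rate is $I^{\rm mmse}(\mathrm{snr},N_r,N_t)=\sum_{i=1}^{N_t}E[\log_2(1+\gamma_i)]$. *)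

theory Defs
  imports "HOL-Probability.Probability" "Jordan_Normal_Form.Schur_Decomposition"
    "Jordan_Normal_Form.Gauss_Jordan_Elimination"
begin

(* log-det mutual information: log2 det(I_Nr + snr/N * G G^dagger); the determinant is
   real and positive for snr > 0, we take its real part *)
definition I_opt :: "real \<Rightarrow> nat \<Rightarrow> nat \<Rightarrow> complex mat \<Rightarrow> real" where
  "I_opt snr Nr N G =
     log 2 (Re (det (1\<^sub>m Nr + (complex_of_real (snr / real N)) \<cdot>\<^sub>m (G * mat_adjoint G))))"

definition mat_trace :: "complex mat \<Rightarrow> complex" where
  "mat_trace A = (\<Sum>i<dim_row A. A $$ (i, i))"

definition chan_mat :: "nat \<Rightarrow> nat \<Rightarrow> ('w \<Rightarrow> nat \<Rightarrow> nat \<Rightarrow> complex) \<Rightarrow> 'w \<Rightarrow> complex mat" where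
  "chan_mat Nr Nt H w = mat Nr Nt (\<lambda>(r, c). H w r c)"

definition delete_col :: "complex mat \<Rightarrow> nat \<Rightarrow> complex mat" where
  "delete_col G i = mat (dim_row G) (dim_col G - 1)
      (\<lambda>(r, c). G $$ (r, if c < i then c else Suc c))"

definition mmse_sinr :: "real \<Rightarrow> nat \<Rightarrow> complex mat \<Rightarrow> nat \<Rightarrow> real" where
  "mmse_sinr snr Nt G i =
     1 / Re ((the (mat_inverse (1\<^sub>m Nt + (complex_of_real (snr / real Nt)) \<cdot>\<^sub>m (mat_adjoint G * G)))) $$ (i, i)) - 1"

definition I_mmse :: "'w measure \<Rightarrow> ('w \<Rightarrow> nat \<Rightarrow> nat \<Rightarrow> complex) \<Rightarrow> real \<Rightarrow> nat \<Rightarrow> nat \<Rightarrow> real" where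
  "I_mmse M H snr Nr Nt =
     (\<Sum>i<Nt. integral\<^sup>L M (\<lambda>w. log 2 (1 + mmse_sinr snr Nt (chan_mat Nr Nt H w) i)))"

end

theory Submission
  imports Defs
begin

lemma adj_index: "mat_adjoint (A::complex mat) = mat (dim_col A) (dim_row A) (\<lambda>(i,j). cnj (A $$ (j,i)))"
  by (rule eq_matI) (auto simp: mat_adjoint_def mat_of_rows_def cols_def)

lemma adj_carrier[simp]: "mat_adjoint (A::complex mat) \<in> carrier_mat (dim_col A) (dim_row A)"
  by (simp add: adj_index)
lemma adj_carrier'[intro]: "(A::complex mat) \<in> carrier_mat m n \<Longrightarrow> mat_adjoint A \<in> carrier_mat n m"
  by (simp add: adj_index)
lemma adj_dims[simp]: "dim_row (mat_adjoint (A::complex mat)) = dim_col A" "dim_col (mat_adjoint (A::complex mat)) = dim_row A"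
  by (simp_all add: adj_index)

lemma meas_cnj[measurable]: "f \<in> borel_measurable M \<Longrightarrow> (\<lambda>x. cnj (f x :: complex)) \<in> borel_measurable M"
  by (rule borel_measurable_continuous_on[OF continuous_on_cnj[OF continuous_on_id]])

lemma det_meas:
  fixes F :: "'w \<Rightarrow> complex mat"
  assumes "\<And>w. F w \<in> carrier_mat n n"
    and "\<And>i j. i < n \<Longrightarrow> j < n \<Longrightarrow> (\<lambda>w. F w $$ (i,j)) \<in> borel_measurable M"
  shows "(\<lambda>w. det (F w)) \<in> borel_measurable M"
proof -
  have e: "det (F w) = (\<Sum>p\<in>{p. p permutes {0..<n}}. signof p * (\<Prod>i=0..<n. F w $$ (i, p i)))" for w
    using assms(1)[of w] unfolding det_def carrier_mat_def by auto
  have "(\<lambda>w. det (F w)) = (\<lambda>w. \<Sum>p\<in>{p. p permutes {0..<n}}. signof p * (\<Prod>i=0..<n. F w $$ (i, p i)))"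
    using e by auto
  also have "\<dots> \<in> borel_measurable M"
  proof (intro borel_measurable_sum borel_measurable_times borel_measurable_prod borel_measurable_const)
    fix p i assume p: "p \<in> {p. p permutes {0..<n}}" and i: "i \<in> {0..<n}"
    then have "p i < n" using permutes_in_image[of p "{0..<n}" i] by auto
    with i show "(\<lambda>w. F w $$ (i, p i)) \<in> borel_measurable M" using assms(2) by auto
  qed
  finally show ?thesis .
qed

lemma gram_carrier: "(G::complex mat) \<in> carrier_mat m n \<Longrightarrow> 1\<^sub>m m + a \<cdot>\<^sub>m (G * mat_adjoint G) \<in> carrier_mat m m"
  by (metis add_carrier_mat one_carrier_mat smult_carrier_mat mult_carrier_mat adj_carrier')

lemma gram_index:
  fixes G :: "complex mat" assumes "G \<in> carrier_mat m n" "i < m" "j < m"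
  shows "(1\<^sub>m m + a \<cdot>\<^sub>m (G * mat_adjoint G)) $$ (i,j) = (if i = j then 1 else 0) + a * (\<Sum>k<n. G $$ (i,k) * cnj (G $$ (j,k)))"
  using assms by (auto simp: adj_index scalar_prod_def lessThan_atLeast0 intro!: sum.cong)

lemma Iopt_meas:
  fixes G :: "'w \<Rightarrow> complex mat"
  assumes "\<And>w. G w \<in> carrier_mat m n"
    and "\<And>i j. i < m \<Longrightarrow> j < n \<Longrightarrow> (\<lambda>w. G w $$ (i,j)) \<in> borel_measurable M"
  shows "(\<lambda>w. I_opt s m n (G w)) \<in> borel_measurable M"
proof -
  have "(\<lambda>w. det (1\<^sub>m m + (complex_of_real (s / real n)) \<cdot>\<^sub>m (G w * mat_adjoint (G w)))) \<in> borel_measurable M"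
  proof (rule det_meas[of _ m])
    fix i j assume ij: "i < m" "j < m"
    show "(\<lambda>w. (1\<^sub>m m + (complex_of_real (s / real n)) \<cdot>\<^sub>m (G w * mat_adjoint (G w))) $$ (i,j)) \<in> borel_measurable M"
      unfolding gram_index[OF assms(1) ij] using assms(2) ij by measurable
  qed (rule gram_carrier[OF assms(1)])
  then show ?thesis unfolding I_opt_def by measurable
qed

lemma sylvester:
  fixes X Y :: "complex mat"
  assumes X: "X \<in> carrier_mat m n" and Y: "Y \<in> carrier_mat n m"
  shows "det (1\<^sub>m m + X * Y) = det (1\<^sub>m n + Y * X)"
proof -
  define L where "L = four_block_mat (1\<^sub>m m) X (0\<^sub>m n m) (1\<^sub>m n)"
  define M where "M = four_block_mat (1\<^sub>m m) (-X) Y (1\<^sub>m n)"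
  have Lc: "L \<in> carrier_mat (m+n) (m+n)" unfolding L_def using X by auto
  have Mc: "M \<in> carrier_mat (m+n) (m+n)" unfolding M_def using X Y by auto
  have XY: "X * Y \<in> carrier_mat m m" "Y * X \<in> carrier_mat n n" using X Y by auto
  have "L * M = four_block_mat (1\<^sub>m m * 1\<^sub>m m + X * Y) (1\<^sub>m m * (-X) + X * 1\<^sub>m n)
      (0\<^sub>m n m * 1\<^sub>m m + 1\<^sub>m n * Y) (0\<^sub>m n m * (-X) + 1\<^sub>m n * 1\<^sub>m n)"
    unfolding L_def M_def by (rule mult_four_block_mat, insert X Y, auto)
  also have "\<dots> = four_block_mat (1\<^sub>m m + X * Y) (0\<^sub>m m n) Y (1\<^sub>m n)"
    using X Y by auto
  finally have LM: "det (L * M) = det (1\<^sub>m m + X * Y)"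
    by (simp add: det_four_block_mat_upper_right_zero[of _ m _ n] XY X Y)
  have "M * L = four_block_mat (1\<^sub>m m * 1\<^sub>m m + (-X) * 0\<^sub>m n m) (1\<^sub>m m * X + (-X) * 1\<^sub>m n)
      (Y * 1\<^sub>m m + 1\<^sub>m n * 0\<^sub>m n m) (Y * X + 1\<^sub>m n * 1\<^sub>m n)"
    unfolding L_def M_def by (rule mult_four_block_mat, insert X Y, auto)
  also have "\<dots> = four_block_mat (1\<^sub>m m) (0\<^sub>m m n) Y (1\<^sub>m n + Y * X)"
    using X Y XY by (auto simp: comm_add_mat[of "Y*X" n n "1\<^sub>m n"] comm_add_mat[of X m n "-X"])
  finally have ML1: "det (M * L) = det (1\<^sub>m n + Y * X)"
    by (simp add: det_four_block_mat_upper_right_zero[of _ m _ n] XY X Y)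
  have "det (L * M) = det (M * L)" using det_mult[OF Lc Mc] det_mult[OF Mc Lc] by (simp add: mult.commute)
  with LM ML1 show ?thesis by simp
qed

lemma mult_mat_vec_idx: "(A::complex mat) \<in> carrier_mat m k \<Longrightarrow> v \<in> carrier_vec k \<Longrightarrow> i < m \<Longrightarrow>
  (A *\<^sub>v v) $ i = (\<Sum>j<k. A $$ (i,j) * v $ j)"
  by (auto simp: scalar_prod_def lessThan_atLeast0 intro!: sum.cong)

lemma cmod_sq: "(complex_of_real (cmod z))^2 = z * cnj z"
  by (metis complex_norm_square of_real_power)

lemma eig_real:
  fixes Y :: "complex mat" and c :: real
  assumes Y: "Y \<in> carrier_mat m n" and c: "c \<ge> 0"
    and ev: "eigenvalue (1\<^sub>m m + complex_of_real c \<cdot>\<^sub>m (Y * mat_adjoint Y)) e"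
  shows "\<exists>r\<ge>1. e = complex_of_real r"
proof -
  let ?A = "1\<^sub>m m + complex_of_real c \<cdot>\<^sub>m (Y * mat_adjoint Y)"
  have Ac: "?A \<in> carrier_mat m m" by (rule gram_carrier[OF Y])
  from ev obtain v where v: "v \<in> carrier_vec m" "v \<noteq> 0\<^sub>v m" "?A *\<^sub>v v = e \<cdot>\<^sub>v v"
    unfolding eigenvalue_def eigenvector_def using Ac by auto
  define w where "w k = (\<Sum>j<m. cnj (Y $$ (j,k)) * v $ j)" for k
  have Av: "(?A *\<^sub>v v) $ i = v $ i + c * (\<Sum>k<n. Y $$ (i,k) * w k)" if i: "i < m" for i
  proof -
    have "(?A *\<^sub>v v) $ i = (\<Sum>j<m. ?A $$ (i,j) * v $ j)"
      by (rule mult_mat_vec_idx[OF Ac v(1) i])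
    also have "\<dots> = (\<Sum>j<m. ((if i = j then 1 else 0) + c * (\<Sum>k<n. Y $$ (i,k) * cnj (Y $$ (j,k)))) * v $ j)"
      by (rule sum.cong, simp, subst gram_index[OF Y i], auto)
    also have "\<dots> = (\<Sum>j<m. (if i = j then v $ j else 0)) + (\<Sum>j<m. c * (\<Sum>k<n. Y $$ (i,k) * cnj (Y $$ (j,k))) * v $ j)"
      by (subst sum.distrib[symmetric], rule sum.cong, auto simp: distrib_right)
    also have "(\<Sum>j<m. (if i = j then v $ j else 0)) = v $ i" using i by simp
    also have "(\<Sum>j<m. c * (\<Sum>k<n. Y $$ (i,k) * cnj (Y $$ (j,k))) * v $ j)
       = c * (\<Sum>j<m. \<Sum>k<n. Y $$ (i,k) * (cnj (Y $$ (j,k)) * v $ j))"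
      by (simp add: sum_distrib_left sum_distrib_right mult.assoc)
    also have "\<dots> = c * (\<Sum>k<n. \<Sum>j<m. Y $$ (i,k) * (cnj (Y $$ (j,k)) * v $ j))"
      by (subst sum.swap, rule refl)
    also have "\<dots> = c * (\<Sum>k<n. Y $$ (i,k) * w k)"
      by (simp add: w_def sum_distrib_left)
    finally show ?thesis .
  qed
  define Nv where "Nv = (\<Sum>i<m. (cmod (v $ i))^2)"
  define W where "W = (\<Sum>k<n. (cmod (w k))^2)"
  have "(\<Sum>i<m. cnj (v $ i) * (?A *\<^sub>v v) $ i) = (\<Sum>i<m. cnj (v $ i) * (e * v $ i))"
    using v by (intro sum.cong) auto
  also have "\<dots> = e * complex_of_real Nv"
    by (simp add: Nv_def sum_distrib_left cmod_sq mult.commute mult.left_commute)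
  finally have 1: "(\<Sum>i<m. cnj (v $ i) * (?A *\<^sub>v v) $ i) = e * complex_of_real Nv" .
  have "(\<Sum>i<m. cnj (v $ i) * (?A *\<^sub>v v) $ i) = (\<Sum>i<m. cnj (v $ i) * (v $ i + c * (\<Sum>k<n. Y $$ (i,k) * w k)))"
    using Av by (intro sum.cong) auto
  also have "\<dots> = complex_of_real Nv + c * (\<Sum>k<n. cnj (w k) * w k)"
    by (simp add: Nv_def w_def distrib_left sum.distrib sum_distrib_left sum_distrib_right cmod_sq
        mult.commute mult.left_commute sum.swap[of _ "{..<n}"])
  also have "\<dots> = complex_of_real (Nv + c * W)"
    by (simp add: W_def cmod_sq mult.commute)
  finally have 2: "e * complex_of_real Nv = complex_of_real (Nv + c * W)" using 1 by simp
  have "Nv > 0"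
  proof -
    from v(1,2) obtain i where i: "i < m" "v $ i \<noteq> 0" by (auto simp: vec_eq_iff)
    have "(cmod (v $ i))^2 \<le> Nv" unfolding Nv_def
      by (rule member_le_sum[of i _ "\<lambda>i. (cmod (v $ i))^2"]) (use i in auto)
    moreover have "(cmod (v $ i))^2 > 0" using i by simp
    ultimately show ?thesis by linarith
  qed
  moreover have "W \<ge> 0" unfolding W_def by (simp add: sum_nonneg)
  ultimately have "(Nv + c * W) / Nv \<ge> 1" using c by simp
  moreover have "e = complex_of_real ((Nv + c * W) / Nv)"
    using 2 \<open>Nv > 0\<close> by (simp add: field_simps)
  ultimately show ?thesis by blast
qed


lemma trace_comm:
  fixes X Y :: "complex mat"
  assumes "X \<in> carrier_mat a b" "Y \<in> carrier_mat b a"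
  shows "mat_trace (X * Y) = mat_trace (Y * X)"
proof -
  have "mat_trace (X * Y) = (\<Sum>i<a. \<Sum>j<b. X $$ (i,j) * Y $$ (j,i))"
    using assms by (auto simp: mat_trace_def scalar_prod_def lessThan_atLeast0 intro!: sum.cong)
  also have "\<dots> = (\<Sum>j<b. \<Sum>i<a. Y $$ (j,i) * X $$ (i,j))"
    by (subst sum.swap) (simp add: mult.commute)
  also have "\<dots> = mat_trace (Y * X)"
    using assms by (auto simp: mat_trace_def scalar_prod_def lessThan_atLeast0 intro!: sum.cong)
  finally show ?thesis .
qed

lemma trace_similar:
  fixes A T :: "complex mat"
  assumes "similar_mat A T"
  shows "mat_trace A = mat_trace T"
proof -
  from similar_matD[OF assms] obtain n P Q where
    c: "{A, T, P, Q} \<subseteq> carrier_mat n n" and PQ: "P * Q = 1\<^sub>m n" and QP: "Q * P = 1\<^sub>m n"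
    and A: "A = P * T * Q" by blast
  have "mat_trace A = mat_trace (Q * (P * T))"
    unfolding A by (rule trace_comm[of _ n n], insert c, auto)
  also have "Q * (P * T) = T" using c QP by (metis assoc_mult_mat insert_subset left_mult_one_mat)
  finally show ?thesis .
qed

lemma gram_trace:
  fixes Y :: "complex mat"
  assumes Y: "Y \<in> carrier_mat m n"
  shows "mat_trace (1\<^sub>m m + complex_of_real c \<cdot>\<^sub>m (Y * mat_adjoint Y))
     = complex_of_real (real m + c * (\<Sum>i<m. \<Sum>k<n. (cmod (Y $$ (i,k)))^2))"
proof -
  let ?A = "1\<^sub>m m + complex_of_real c \<cdot>\<^sub>m (Y * mat_adjoint Y)"
  have d: "dim_row ?A = m" using gram_carrier[OF Y] by blast
  have "mat_trace ?A = (\<Sum>i<m. ?A $$ (i,i))" unfolding mat_trace_def d ..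
  also have "\<dots> = (\<Sum>i<m. 1 + c * (\<Sum>k<n. Y $$ (i,k) * cnj (Y $$ (i,k))))"
    by (rule sum.cong) (simp_all add: gram_index[OF Y])
  also have "\<dots> = complex_of_real (real m + c * (\<Sum>i<m. \<Sum>k<n. (cmod (Y $$ (i,k)))^2))"
    by (simp add: sum.distrib sum_distrib_left cmod_sq)
  finally show ?thesis .
qed

lemma gram_det:
  fixes Y :: "complex mat" and c :: real
  assumes Y: "Y \<in> carrier_mat m n" and c: "c \<ge> 0"
  shows "\<exists>r. det (1\<^sub>m m + complex_of_real c \<cdot>\<^sub>m (Y * mat_adjoint Y)) = complex_of_real r \<and> r \<ge> 1
     \<and> ln r \<le> c * (\<Sum>i<m. \<Sum>k<n. (cmod (Y $$ (i,k)))^2)"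
proof -
  let ?A = "1\<^sub>m m + complex_of_real c \<cdot>\<^sub>m (Y * mat_adjoint Y)"
  have Ac: "?A \<in> carrier_mat m m" by (rule gram_carrier[OF Y])
  obtain es where es: "char_poly ?A = (\<Prod> a \<leftarrow> es. [:- a, 1:])"
    using char_poly_factorized[OF Ac] by blast
  define T where "T = schur_upper_triangular ?A es"
  have Tc: "T \<in> carrier_mat m m" and ut: "upper_triangular T" and sim: "similar_mat ?A T"
    using schur_upper_triangular[OF Ac es] unfolding T_def by auto
  have cpT: "char_poly ?A = (\<Prod> a \<leftarrow> diag_mat T. [:- a, 1:])"
    using char_poly_similar[OF sim] char_poly_upper_triangular[OF Tc ut] by simp
  have "\<exists>r\<ge>1. T $$ (i,i) = complex_of_real r" if i: "i < m" for i
  proof -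
    have mem: "T $$ (i,i) \<in> set (diag_mat T)" using i Tc by (auto simp: diag_mat_def)
    have "poly (char_poly ?A) (T $$ (i,i)) = 0"
      unfolding cpT poly_prod_list using mem
      by (auto simp: prod_list_zero_iff)
    then have "eigenvalue ?A (T $$ (i,i))" using eigenvalue_root_char_poly[OF Ac] by simp
    then show ?thesis by (rule eig_real[OF Y c])
  qed
  then obtain r where r: "\<And>i. i < m \<Longrightarrow> r i \<ge> 1 \<and> T $$ (i,i) = complex_of_real (r i)" by metis
  have "det ?A = det T" by (rule det_similar[OF sim])
  also have "\<dots> = prod_list (diag_mat T)" by (rule det_upper_triangular[OF ut Tc])
  also have "\<dots> = (\<Prod>i<m. T $$ (i,i))" using Tc
    by (simp add: diag_mat_def lessThan_atLeast0 prod.distinct_set_conv_list[of "[0..<m]", simplified])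
  also have "\<dots> = complex_of_real (\<Prod>i<m. r i)" using r by simp
  finally have detA: "det ?A = complex_of_real (\<Prod>i<m. r i)" .
  have "mat_trace ?A = mat_trace T" by (rule trace_similar[OF sim])
  also have "\<dots> = (\<Sum>i<m. T $$ (i,i))" using Tc by (simp add: mat_trace_def)
  also have "\<dots> = complex_of_real (\<Sum>i<m. r i)" using r by simp
  finally have "complex_of_real (\<Sum>i<m. r i) = complex_of_real (real m + c * (\<Sum>i<m. \<Sum>k<n. (cmod (Y $$ (i,k)))^2))"
    using gram_trace[OF Y, of c] by simp
  then have tr: "(\<Sum>i<m. r i) = real m + c * (\<Sum>i<m. \<Sum>k<n. (cmod (Y $$ (i,k)))^2)"
    using of_real_eq_iff by blast
  have pos: "\<And>i. i < m \<Longrightarrow> r i > 0" using r by fastforce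
  have "ln (\<Prod>i<m. r i) = (\<Sum>i<m. ln (r i))" using pos by (intro ln_prod) (auto, fastforce)
  also have "\<dots> \<le> (\<Sum>i<m. r i - 1)" by (rule sum_mono, rule ln_le_minus_one, use pos in auto)
  also have "\<dots> = c * (\<Sum>i<m. \<Sum>k<n. (cmod (Y $$ (i,k)))^2)" using tr by (simp add: sum_subtractf)
  finally have "ln (\<Prod>i<m. r i) \<le> c * (\<Sum>i<m. \<Sum>k<n. (cmod (Y $$ (i,k)))^2)" .
  moreover have "(\<Prod>i<m. r i) \<ge> 1" using r by (intro prod_ge_1) auto
  ultimately show ?thesis using detA by blast
qed


lemma inv_smult_one: "(a::complex) \<noteq> 0 \<Longrightarrow> inverse a \<cdot>\<^sub>m (a \<cdot>\<^sub>m 1\<^sub>m n) = 1\<^sub>m n"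
  by (rule eq_matI) auto

lemma inv_diag:
  fixes A :: "complex mat"
  assumes A: "A \<in> carrier_mat n n" and d: "det A \<noteq> 0" and i: "i < n"
  shows "the (mat_inverse A) $$ (i,i) = det (mat_delete A i i) / det A"
proof -
  define B' where "B' = inverse (det A) \<cdot>\<^sub>m adj_mat A"
  have B'c: "B' \<in> carrier_mat n n" unfolding B'_def using adj_mat(1)[OF A] by simp
  have AB': "A * B' = 1\<^sub>m n" unfolding B'_def
    using adj_mat[OF A] A d by (simp add: mult_smult_distrib inv_smult_one)
  have B'A: "B' * A = 1\<^sub>m n" unfolding B'_def
    using adj_mat[OF A] A d by (simp add: mult_smult_assoc_mat inv_smult_one)
  have "mat_inverse A \<noteq> None"
    using mat_inverse(1)[OF A, where b="()"] det_non_zero_imp_unit[OF A d, where b="()"] by blast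
  then obtain B where B: "mat_inverse A = Some B" by blast
  from mat_inverse(2)[OF A B] have AB: "A * B = 1\<^sub>m n" and BA: "B * A = 1\<^sub>m n" and Bc: "B \<in> carrier_mat n n"
    by auto
  have "B = B * (A * B')" using Bc AB' by simp
  also have "\<dots> = (B * A) * B'" using Bc A B'c by (simp add: assoc_mult_mat)
  also have "\<dots> = B'" using BA B'c by simp
  finally have "B = B'" .
  then have "the (mat_inverse A) $$ (i,i) = B' $$ (i,i)" using B by simp
  also have "\<dots> = inverse (det A) * cofactor A i i" unfolding B'_def adj_mat_def using A i by simp
  also have "\<dots> = det (mat_delete A i i) / det A" unfolding cofactor_def
    by (simp add: field_simps)
  finally show ?thesis .
qed

lemma gram2_index:
  fixes G :: "complex mat" assumes "G \<in> carrier_mat m n" "i < n" "j < n"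
  shows "(1\<^sub>m n + a \<cdot>\<^sub>m (mat_adjoint G * G)) $$ (i,j) = (if i = j then 1 else 0) + a * (\<Sum>k<m. cnj (G $$ (k,i)) * G $$ (k,j))"
  using assms by (auto simp: adj_index scalar_prod_def lessThan_atLeast0 intro!: sum.cong)

lemma delete_col_carrier: "G \<in> carrier_mat m n \<Longrightarrow> delete_col G i \<in> carrier_mat m (n - 1)"
  by (auto simp: delete_col_def)

lemma minor_gram:
  fixes G :: "complex mat"
  assumes G: "G \<in> carrier_mat m n" and i: "i < n"
  shows "mat_delete (1\<^sub>m n + a \<cdot>\<^sub>m (mat_adjoint G * G)) i i
      = 1\<^sub>m (n - 1) + a \<cdot>\<^sub>m (mat_adjoint (delete_col G i) * delete_col G i)"
    (is "?L = ?R")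
proof (rule eq_matI)
  have Gi: "delete_col G i \<in> carrier_mat m (n - 1)" by (rule delete_col_carrier[OF G])
  show "dim_row ?L = dim_row ?R" "dim_col ?L = dim_col ?R" using G Gi by auto
  fix a' b' assume ab: "a' < dim_row ?R" "b' < dim_col ?R"
  then have ab': "a' < n - 1" "b' < n - 1" using Gi by auto
  let ?a = "if a' < i then a' else Suc a'" and ?b = "if b' < i then b' else Suc b'"
  have "?L $$ (a',b') = (1\<^sub>m n + a \<cdot>\<^sub>m (mat_adjoint G * G)) $$ (?a, ?b)"
    unfolding mat_delete_def using ab' G by auto
  also have "\<dots> = (if ?a = ?b then 1 else 0) + a * (\<Sum>k<m. cnj (G $$ (k,?a)) * G $$ (k,?b))"
    by (rule gram2_index[OF G]) (use ab' in auto)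
  also have "\<dots> = (if a' = b' then 1 else 0) + a * (\<Sum>k<m. cnj (delete_col G i $$ (k,a')) * delete_col G i $$ (k,b'))"
    using ab' G by (auto simp: delete_col_def intro!: sum.cong)
  also have "\<dots> = ?R $$ (a', b')"
    by (rule gram2_index[OF Gi ab', symmetric])
  finally show "?L $$ (a',b') = ?R $$ (a', b')" .
qed

lemma syl_gram:
  fixes G :: "complex mat"
  assumes G: "G \<in> carrier_mat m n"
  shows "det (1\<^sub>m n + a \<cdot>\<^sub>m (mat_adjoint G * G)) = det (1\<^sub>m m + a \<cdot>\<^sub>m (G * mat_adjoint G))"
proof -
  have aG: "mat_adjoint G \<in> carrier_mat n m" using G by auto
  have "det (1\<^sub>m n + a \<cdot>\<^sub>m (mat_adjoint G * G)) = det (1\<^sub>m n + mat_adjoint G * (a \<cdot>\<^sub>m G))"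
    using G aG by (simp add: mult_smult_distrib)
  also have "\<dots> = det (1\<^sub>m m + (a \<cdot>\<^sub>m G) * mat_adjoint G)"
    by (rule sylvester[symmetric], use G aG in auto)
  also have "\<dots> = det (1\<^sub>m m + a \<cdot>\<^sub>m (G * mat_adjoint G))"
    using G aG by (simp add: mult_smult_assoc_mat)
  finally show ?thesis .
qed


definition LD :: "real \<Rightarrow> nat \<Rightarrow> complex mat \<Rightarrow> real" where
  "LD c m Y = log 2 (Re (det (1\<^sub>m m + complex_of_real c \<cdot>\<^sub>m (Y * mat_adjoint Y))))"

lemma ld_bounds:
  fixes Y :: "complex mat"
  assumes Y: "Y \<in> carrier_mat m n" and c: "c \<ge> 0"
  shows "0 \<le> LD c m Y" "LD c m Y \<le> c / ln 2 * (\<Sum>i<m. \<Sum>k<n. (cmod (Y $$ (i,k)))^2)"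
proof -
  obtain r where r: "det (1\<^sub>m m + complex_of_real c \<cdot>\<^sub>m (Y * mat_adjoint Y)) = complex_of_real r" "r \<ge> 1"
    "ln r \<le> c * (\<Sum>i<m. \<Sum>k<n. (cmod (Y $$ (i,k)))^2)"
    using gram_det[OF Y c] by blast
  have L: "LD c m Y = ln r / ln 2" unfolding LD_def r(1) by (simp add: log_def)
  show "0 \<le> LD c m Y" unfolding L using r(2) by simp
  show "LD c m Y \<le> c / ln 2 * (\<Sum>i<m. \<Sum>k<n. (cmod (Y $$ (i,k)))^2)"
    unfolding L using r(3) by (simp add: divide_right_mono)
qed

lemma zero_col_gram: "(Y::complex mat) \<in> carrier_mat m 0 \<Longrightarrow> a \<cdot>\<^sub>m (Y * mat_adjoint Y) = b \<cdot>\<^sub>m (Y * mat_adjoint Y)"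
  by (rule eq_matI) (auto simp: scalar_prod_def)

lemma Iopt_del:
  fixes G :: "complex mat"
  assumes G: "G \<in> carrier_mat m n" and n: "n > 0"
  shows "I_opt ((real n - 1) / real n * snr) m (n - 1) (delete_col G i) = LD (snr / real n) m (delete_col G i)"
proof (cases "n = 1")
  case True
  have "delete_col G i \<in> carrier_mat m 0" using delete_col_carrier[OF G] True by simp
  then show ?thesis unfolding I_opt_def LD_def using zero_col_gram by metis
next
  case False
  then have "real (n - 1) = real n - 1" "real n - 1 \<noteq> 0" using n by (auto simp: of_nat_diff)
  then have "(real n - 1) / real n * snr / real (n - 1) = snr / real n" by (simp add: field_simps)
  then show ?thesis unfolding I_opt_def LD_def by simp
qed

lemma gram2_carrier: "(G::complex mat) \<in> carrier_mat m n \<Longrightarrow> 1\<^sub>m n + a \<cdot>\<^sub>m (mat_adjoint G * G) \<in> carrier_mat n n"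
  by (metis add_carrier_mat one_carrier_mat smult_carrier_mat mult_carrier_mat adj_carrier')

lemma pointwise:
  fixes G :: "complex mat"
  assumes G: "G \<in> carrier_mat m n" and i: "i < n" and snr: "snr > 0"
  shows "log 2 (1 + mmse_sinr snr n G i) = LD (snr / real n) m G - LD (snr / real n) m (delete_col G i)"
proof -
  define c where "c = snr / real n"
  have c: "c \<ge> 0" unfolding c_def using snr by simp
  have Gi: "delete_col G i \<in> carrier_mat m (n - 1)" by (rule delete_col_carrier[OF G])
  obtain r where r: "det (1\<^sub>m m + complex_of_real c \<cdot>\<^sub>m (G * mat_adjoint G)) = complex_of_real r" "r \<ge> 1"
    using gram_det[OF G c] by blast
  obtain ri where ri: "det (1\<^sub>m m + complex_of_real c \<cdot>\<^sub>m (delete_col G i * mat_adjoint (delete_col G i))) = complex_of_real ri" "ri \<ge> 1"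
    using gram_det[OF Gi c] by blast
  let ?A = "1\<^sub>m n + complex_of_real c \<cdot>\<^sub>m (mat_adjoint G * G)"
  have Ac: "?A \<in> carrier_mat n n" by (rule gram2_carrier[OF G])
  have dA: "det ?A = complex_of_real r" using syl_gram[OF G] r(1) by simp
  have dAi: "det (mat_delete ?A i i) = complex_of_real ri"
    unfolding minor_gram[OF G i] syl_gram[OF Gi] using ri(1) by simp
  have "the (mat_inverse ?A) $$ (i,i) = complex_of_real ri / complex_of_real r"
    using inv_diag[OF Ac _ i] dA dAi r(2) by simp
  then have "mmse_sinr snr n G i = r / ri - 1"
    unfolding mmse_sinr_def c_def[symmetric] by simp
  then have "log 2 (1 + mmse_sinr snr n G i) = log 2 (r / ri)" by simp
  also have "\<dots> = log 2 r - log 2 ri" using r(2) ri(2) by (simp add: log_divide)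
  also have "\<dots> = LD c m G - LD c m (delete_col G i)"
    unfolding LD_def r(1) ri(1) by simp
  finally show ?thesis unfolding c_def .
qed

lemma trace_gram:
  fixes Y :: "complex mat" assumes Y: "Y \<in> carrier_mat m n"
  shows "Re (mat_trace (Y * mat_adjoint Y)) = (\<Sum>i<m. \<Sum>k<n. (cmod (Y $$ (i,k)))^2)"
proof -
  have "mat_trace (Y * mat_adjoint Y) = (\<Sum>i<m. \<Sum>k<n. Y $$ (i,k) * cnj (Y $$ (i,k)))"
    unfolding mat_trace_def using Y by (auto simp: adj_index scalar_prod_def lessThan_atLeast0 intro!: sum.cong)
  also have "\<dots> = complex_of_real (\<Sum>i<m. \<Sum>k<n. (cmod (Y $$ (i,k)))^2)"
    by (simp add: cmod_sq)
  finally show ?thesis by simp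
qed

lemma del_sum_le:
  fixes f :: "nat \<Rightarrow> real"
  assumes "\<And>k. f k \<ge> 0" and i: "i < n"
  shows "(\<Sum>k<n - 1. f (if k < i then k else Suc k)) \<le> (\<Sum>k<n. f k)"
proof -
  let ?g = "\<lambda>k. if k < i then k else Suc k"
  have inj: "inj_on ?g {..<n - 1}" by (auto simp: inj_on_def split: if_splits)
  have sub: "?g ` {..<n - 1} \<subseteq> {..<n}" using i by auto
  have "(\<Sum>k<n - 1. f (?g k)) = sum f (?g ` {..<n - 1})" using sum.reindex[OF inj, of f] by (simp add: comp_def)
  also have "\<dots> \<le> (\<Sum>k<n. f k)" by (rule sum_mono2[OF _ sub]) (use assms in auto)
  finally show ?thesis .
qed


theorem theorem1:
  fixes M :: "'w measure" and H :: "'w \<Rightarrow> nat \<Rightarrow> nat \<Rightarrow> complex"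
    and Nr Nt :: nat and snr :: real
  assumes "prob_space M"
    and "Nr > 0" and "Nt > 0"
    and "\<And>r c. r < Nr \<Longrightarrow> c < Nt \<Longrightarrow> (\<lambda>w. H w r c) \<in> borel_measurable M"
    and "integral\<^sup>L M (\<lambda>w. Re (mat_trace (chan_mat Nr Nt H w * mat_adjoint (chan_mat Nr Nt H w))))
           = real Nr * real Nt"
    and "snr > 0"
  shows "I_mmse M H snr Nr Nt =
           real Nt * integral\<^sup>L M (\<lambda>w. I_opt snr Nr Nt (chan_mat Nr Nt H w))
           - (\<Sum>i<Nt. integral\<^sup>L M (\<lambda>w. I_opt ((real Nt - 1) / real Nt * snr) Nr (Nt - 1)
                                            (delete_col (chan_mat Nr Nt H w) i)))"
proof -
  note meas = assms(4)
  define G where "G w = chan_mat Nr Nt H w" for w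
  define c where "c = snr / real Nt"
  have c: "c \<ge> 0" unfolding c_def using assms(6) by simp
  have Gc: "G w \<in> carrier_mat Nr Nt" for w unfolding G_def chan_mat_def by simp
  have Gd[simp]: "dim_row (G w) = Nr" "dim_col (G w) = Nt" for w unfolding G_def chan_mat_def by simp_all
  have Gidx: "G w $$ (r,k) = H w r k" if "r < Nr" "k < Nt" for w r k
    unfolding G_def chan_mat_def using that by simp
  define T where "T w = (\<Sum>r<Nr. \<Sum>k<Nt. (cmod (H w r k))^2)" for w
  have T: "Re (mat_trace (chan_mat Nr Nt H w * mat_adjoint (chan_mat Nr Nt H w))) = T w" for w
    using trace_gram[OF Gc[of w]] Gidx unfolding G_def T_def by simp
  have "integral\<^sup>L M T \<noteq> 0" using assms(5) assms(2,3) unfolding T by simp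
  then have intT: "integrable M T" using not_integrable_integral_eq by blast
  define F where "F w = I_opt snr Nr Nt (G w)" for w
  define Fi where "Fi i w = I_opt ((real Nt - 1) / real Nt * snr) Nr (Nt - 1) (delete_col (G w) i)" for i w
  have F_LD: "F w = LD c Nr (G w)" for w unfolding F_def LD_def I_opt_def c_def by simp
  have Fi_LD: "Fi i w = LD c Nr (delete_col (G w) i)" for i w
    unfolding Fi_def c_def by (rule Iopt_del[OF Gc assms(3)])
  have Fm: "F \<in> borel_measurable M" unfolding F_def
    by (rule Iopt_meas[OF Gc]) (simp add: Gidx meas)
  have Fim: "Fi i \<in> borel_measurable M" if i: "i < Nt" for i unfolding Fi_def
  proof (rule Iopt_meas[OF delete_col_carrier[OF Gc]])
    fix r k assume rk: "r < Nr" "k < Nt - 1"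
    have "(\<lambda>w. delete_col (G w) i $$ (r,k)) = (\<lambda>w. H w r (if k < i then k else Suc k))"
      using rk by (intro ext) (auto simp: delete_col_def Gidx)
    then show "(\<lambda>w. delete_col (G w) i $$ (r,k)) \<in> borel_measurable M"
      using meas rk by auto
  qed
  have intB: "integrable M (\<lambda>w. c / ln 2 * T w)" using intT by simp
  have intF: "integrable M F"
  proof (rule Bochner_Integration.integrable_bound[OF intB Fm], rule AE_I2)
    fix w
    have "T w = (\<Sum>r<Nr. \<Sum>k<Nt. (cmod (G w $$ (r,k)))^2)" unfolding T_def by (simp add: Gidx)
    then have "0 \<le> F w" "F w \<le> c / ln 2 * T w" using ld_bounds[OF Gc c] unfolding F_LD by auto
    then show "norm (F w) \<le> norm (c / ln 2 * T w)"
      unfolding real_norm_def using abs_of_nonneg[of "F w"] abs_ge_self[of "c / ln 2 * T w"] by linarith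
  qed
  have intFi: "integrable M (Fi i)" if i: "i < Nt" for i
  proof (rule Bochner_Integration.integrable_bound[OF intB Fim[OF i]], rule AE_I2)
    fix w
    have "(\<Sum>r<Nr. \<Sum>k<Nt - 1. (cmod (delete_col (G w) i $$ (r,k)))^2)
        = (\<Sum>r<Nr. \<Sum>k<Nt - 1. (cmod (H w r (if k < i then k else Suc k)))^2)"
      using Gc by (auto simp: delete_col_def Gidx intro!: sum.cong)
    also have "\<dots> \<le> T w" unfolding T_def
      by (rule sum_mono, rule del_sum_le[OF _ i]) simp
    finally have le: "(\<Sum>r<Nr. \<Sum>k<Nt - 1. (cmod (delete_col (G w) i $$ (r,k)))^2) \<le> T w" .
    have "0 \<le> Fi i w" "Fi i w \<le> c / ln 2 * (\<Sum>r<Nr. \<Sum>k<Nt - 1. (cmod (delete_col (G w) i $$ (r,k)))^2)"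
      using ld_bounds[OF delete_col_carrier[OF Gc] c] unfolding Fi_LD by auto
    moreover have "c / ln 2 * (\<Sum>r<Nr. \<Sum>k<Nt - 1. (cmod (delete_col (G w) i $$ (r,k)))^2) \<le> c / ln 2 * T w"
      using le c by (intro mult_left_mono) auto
    ultimately show "norm (Fi i w) \<le> norm (c / ln 2 * T w)"
      unfolding real_norm_def using abs_of_nonneg[of "Fi i w"] abs_ge_self[of "c / ln 2 * T w"] by linarith
  qed
  have "I_mmse M H snr Nr Nt = (\<Sum>i<Nt. integral\<^sup>L M (\<lambda>w. F w - Fi i w))"
    unfolding I_mmse_def
  proof (rule sum.cong[OF refl], rule Bochner_Integration.integral_cong[OF refl])
    fix i w assume i: "i \<in> {..<Nt}"
    show "log 2 (1 + mmse_sinr snr Nt (chan_mat Nr Nt H w) i) = F w - Fi i w"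
      unfolding F_LD Fi_LD c_def using pointwise[OF Gc, of i snr w] i assms(6) by (simp add: G_def)
  qed
  also have "\<dots> = (\<Sum>i<Nt. integral\<^sup>L M F - integral\<^sup>L M (Fi i))"
    by (rule sum.cong[OF refl], rule Bochner_Integration.integral_diff[OF intF intFi]) simp
  also have "\<dots> = real Nt * integral\<^sup>L M F - (\<Sum>i<Nt. integral\<^sup>L M (Fi i))"
    by (simp add: sum_subtractf)
  finally show ?thesis unfolding F_def Fi_def G_def by simp
qed
end
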